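(* Consider the problem of minimizing $\pmb{c}^T\pmb{x}$ subject to $\pmb{x}\in\mathbb{X}$ and, for each $r\in[m]$, the constraint $$\sup_{\mathrm{P}\in\mathcal{P}^{\ell}(\pi_r)}\mathbf{E}_{\mathrm{P}}[\tilde{\pmb{a}}_r^T\pmb{x}]\le b_r,$$ where for each $r$ the joint possibility distribution $\pi_r$ on $\mathbb{R}^n$ and the ambiguity set $\mathcal{P}^{\ell}(\pi_r)$ are constructed as in the context (with data $\hat{\pmb{a}}^r$, $\underline a^r_j,\overline a^r_j$, $\pi_{\tilde a^r_j}$, $\Gamma_r$, $\pi_{\tilde\delta_r}$, $\pmb{B}^r$ depending on $r$). If $\mathbb{X}\subseteq\mathbb{R}^n$ is a polyhedron described by a finite system of linear constraints, then this problem is equivalent to a second-order cone program (in $\pmb{x}$ and finitely many auxiliary variables).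
   Context: $\pmb{c}\in\mathbb{R}^n$, $\pmb{b}\in\mathbb{R}^m$, $\ell\ge1$ an integer, $\Lambda=\{0,\dots,\ell\}$, $\lambda_i=i/\ell$. For one constraint the construction is: for each $j\in[n]$, $\hat a_j\in\mathbb{R}$, $\underline a_j,\overline a_j>0$, and $\pi_{\tilde a_j}:\mathbb{R}\to[0,1]$ continuous with $\pi_{\tilde a_j}(\hat a_j)=1$, zero outside $(\hat a_j-\underline a_j,\hat a_j+\overline a_j)$, strictly increasing on $[\hat a_j-\underline a_j,\hat a_j]$, strictly decreasing on $[\hat a_j,\hat a_j+\overline a_j]$; $[\underline a_j(\lambda),\overline a_j(\lambda)]=\{t:\pi_{\tilde a_j}(t)\ge\lambda\}$ for $\lambda\in(0,1]$, $\underline a_j(0)=\hat a_j-\underline a_j$, $\overline a_j(0)=\hat a_j+\overline a_j$. $\Gamma>0$, $\pi_{\tilde\delta}:[0,\infty)\to[0,1]$ continuous with $\pi_{\tilde\delta}(0)=1$, strictly decreasing on $[0,\Gamma]$, zero on $[\Gamma,\infty)$; $[0,\overline\delta(\lambda)]=\{t\ge0:\pi_{\tilde\delta}(t)\ge\lambda\}$ for $\lambda\in(0,1]$, $\overline\delta(0)=\Gamma$. $\pmb{B}$ is a real $n\times n$ matrix, $\pi(\pmb{a})=\min\{\pi_{\tilde a_1}(a_1),\dots,\pi_{\tilde a_n}(a_n),\pi_{\tilde\delta}(\|\pmb{B}(\pmb{a}-\hat{\pmb{a}})\|_2)\}$. $\mathcal{C}(\lambda)=\{\pmb{a}:a_j\in[\underline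 a_j(\lambda),\overline a_j(\lambda)]\ \forall j,\ \|\pmb{B}(\pmb{a}-\hat{\pmb{a}})\|_2\le\overline\delta(\lambda)\}$ for $\lambda\in[0,1]$, and $\mathcal{P}^{\ell}(\pi)=\{\mathrm{P}\text{ Borel probability measure on }\mathbb{R}^n:\ \mathrm{P}(\mathcal{C}(\lambda_i))\ge1-\lambda_i\ \forall i\in\Lambda\}$. *)

theory Defs
  imports "HOL-Probability.Probability"
begin

definition marg_poss :: "(real \<Rightarrow> real) \<Rightarrow> real \<Rightarrow> real \<Rightarrow> real \<Rightarrow> bool" where
  "marg_poss p ah lo hi \<longleftrightarrow>
     lo > 0 \<and> hi > 0 \<and> continuous_on UNIV p \<and> (\<forall>t. 0 \<le> p t \<and> p t \<le> 1) \<and>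
     p ah = 1 \<and> (\<forall>t. t \<notin> {ah - lo <..< ah + hi} \<longrightarrow> p t = 0) \<and>
     strict_mono_on {ah - lo .. ah} p \<and>
     (\<forall>s\<in>{ah .. ah + hi}. \<forall>t\<in>{ah .. ah + hi}. s < t \<longrightarrow> p t < p s)"

definition dev_poss :: "(real \<Rightarrow> real) \<Rightarrow> real \<Rightarrow> bool" where
  "dev_poss p G \<longleftrightarrow>
     G > 0 \<and> continuous_on {0..} p \<and> (\<forall>t\<ge>0. 0 \<le> p t \<and> p t \<le> 1) \<and> p 0 = 1 \<and>
     (\<forall>s\<in>{0..G}. \<forall>t\<in>{0..G}. s < t \<longrightarrow> p t < p s) \<and> (\<forall>t\<ge>G. p t = 0)"

definition cut_lo :: "(real \<Rightarrow> real) \<Rightarrow> real \<Rightarrow> real \<Rightarrow> real \<Rightarrow> real" where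
  "cut_lo p ah lo lam = (if lam = 0 then ah - lo else Inf {t. p t \<ge> lam})"

definition cut_hi :: "(real \<Rightarrow> real) \<Rightarrow> real \<Rightarrow> real \<Rightarrow> real \<Rightarrow> real" where
  "cut_hi p ah hi lam = (if lam = 0 then ah + hi else Sup {t. p t \<ge> lam})"

definition dev_hi :: "(real \<Rightarrow> real) \<Rightarrow> real \<Rightarrow> real \<Rightarrow> real" where
  "dev_hi p G lam = (if lam = 0 then G else Sup {t. t \<ge> 0 \<and> p t \<ge> lam})"

definition Cset ::
  "('n::finite \<Rightarrow> real \<Rightarrow> real) \<Rightarrow> real^'n \<Rightarrow> ('n \<Rightarrow> real) \<Rightarrow> ('n \<Rightarrow> real) \<Rightarrow>
   (real \<Rightarrow> real) \<Rightarrow> real \<Rightarrow> real^'n^'n \<Rightarrow> real \<Rightarrow> (real^'n) set" where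
  "Cset pa ah lo hi pd G B lam =
     {a. (\<forall>j. cut_lo (pa j) (ah $ j) (lo j) lam \<le> a $ j \<and> a $ j \<le> cut_hi (pa j) (ah $ j) (hi j) lam)
         \<and> norm (B *v (a - ah)) \<le> dev_hi pd G lam}"

definition amb_set :: "nat \<Rightarrow> (real \<Rightarrow> (real^'n::finite) set) \<Rightarrow> (real^'n) measure set" where
  "amb_set l C = {P. sets P = sets borel \<and> prob_space P \<and>
      (\<forall>i\<in>{0..l}. measure P (C (real i / real l)) \<ge> 1 - real i / real l)}"

definition worst_exp :: "(real^'n) measure set \<Rightarrow> real^'n \<Rightarrow> real" where
  "worst_exp PS x = Sup ((\<lambda>P. integral\<^sup>L P (\<lambda>a. a \<bullet> x)) ` PS)"

text \<open>Second-order cone programs in variables x (real^'n) and auxiliary y_0..y_{N-1}.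
  An affine form is (coefficients on x, coefficients on y, constant).
  A SOC constraint (us, t) reads  sqrt(sum_{u in us} u(x,y)^2) <= t(x,y);
  with us = [] it is a linear inequality.\<close>
type_synonym 'n aff = "(real^'n) \<times> (nat \<Rightarrow> real) \<times> real"

definition aff_eval :: "nat \<Rightarrow> 'n::finite aff \<Rightarrow> real^'n \<Rightarrow> (nat \<Rightarrow> real) \<Rightarrow> real" where
  "aff_eval N f x y = fst f \<bullet> x + (\<Sum>k<N. fst (snd f) k * y k) + snd (snd f)"

definition soc_holds :: "nat \<Rightarrow> ('n::finite aff list \<times> 'n aff) \<Rightarrow> real^'n \<Rightarrow> (nat \<Rightarrow> real) \<Rightarrow> bool" where
  "soc_holds N c x y \<longleftrightarrow>
     sqrt (\<Sum>u\<leftarrow>fst c. (aff_eval N u x y)\<^sup>2) \<le> aff_eval N (snd c) x y"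

end

theory Submission
  imports Defs
begin


lemma cut_set_props:
  assumes "marg_poss p ah lo hi" "0 < lam" "lam \<le> 1"
  shows "ah \<in> {t. p t \<ge> lam}" "{t. p t \<ge> lam} \<subseteq> {ah - lo <..< ah + hi}"
proof -
  show "ah \<in> {t. p t \<ge> lam}" using assms by (auto simp: marg_poss_def)
  show "{t. p t \<ge> lam} \<subseteq> {ah - lo <..< ah + hi}"
  proof
    fix t assume "t \<in> {t. p t \<ge> lam}"
    then have "p t \<noteq> 0" using assms(2) by auto
    then show "t \<in> {ah - lo <..< ah + hi}" using assms(1) unfolding marg_poss_def by blast
  qed
qed

lemma cut_lo_le:
  assumes "marg_poss p ah lo hi" "0 \<le> lam" "lam \<le> 1"
  shows "cut_lo p ah lo lam \<le> ah"
proof (cases "lam = 0")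
  case True then show ?thesis using assms by (simp add: cut_lo_def marg_poss_def)
next
  case False
  with assms have l: "0 < lam" by auto
  note c = cut_set_props[OF assms(1) l assms(3)]
  have "bdd_below {t. p t \<ge> lam}" using c(2) by (meson bdd_below_Ioo bdd_below_mono)
  then show ?thesis using False c(1) by (simp add: cut_lo_def cInf_lower)
qed

lemma cut_hi_ge:
  assumes "marg_poss p ah lo hi" "0 \<le> lam" "lam \<le> 1"
  shows "ah \<le> cut_hi p ah hi lam"
proof (cases "lam = 0")
  case True then show ?thesis using assms by (simp add: cut_hi_def marg_poss_def)
next
  case False
  with assms have l: "0 < lam" by auto
  note c = cut_set_props[OF assms(1) l assms(3)]
  have "bdd_above {t. p t \<ge> lam}" using c(2) by (meson bdd_above_Ioo bdd_above_mono)
  then show ?thesis using False c(1) by (simp add: cut_hi_def cSup_upper)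
qed

lemma cut_lo_mono:
  assumes "marg_poss p ah lo hi" "0 \<le> lam" "lam \<le> mu" "mu \<le> 1"
  shows "cut_lo p ah lo lam \<le> cut_lo p ah lo mu"
proof (cases "mu = 0")
  case True then show ?thesis using assms by simp
next
  case False
  then have m: "0 < mu" using assms by auto
  note cm = cut_set_props[OF assms(1) m assms(4)]
  show ?thesis
  proof (cases "lam = 0")
    case True
    have "ah - lo \<le> Inf {t. p t \<ge> mu}"
      using cm by (intro cInf_greatest) force+
    then show ?thesis using True False by (simp add: cut_lo_def)
  next
    case F2: False
    then have l: "0 < lam" using assms by auto
    note cl = cut_set_props[OF assms(1) l] 
    have "bdd_below {t. p t \<ge> lam}" using cl(2) assms by (meson bdd_below_Ioo bdd_below_mono order_trans)
    moreover have "{t. p t \<ge> mu} \<subseteq> {t. p t \<ge> lam}" using assms by auto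
    ultimately have "Inf {t. p t \<ge> lam} \<le> Inf {t. p t \<ge> mu}"
      using cm(1) by (intro cInf_superset_mono) auto
    then show ?thesis using False F2 by (simp add: cut_lo_def)
  qed
qed

lemma cut_hi_mono:
  assumes "marg_poss p ah lo hi" "0 \<le> lam" "lam \<le> mu" "mu \<le> 1"
  shows "cut_hi p ah hi mu \<le> cut_hi p ah hi lam"
proof (cases "mu = 0")
  case True then show ?thesis using assms by simp
next
  case False
  then have m: "0 < mu" using assms by auto
  note cm = cut_set_props[OF assms(1) m assms(4)]
  show ?thesis
  proof (cases "lam = 0")
    case True
    have "Sup {t. p t \<ge> mu} \<le> ah + hi"
      using cm by (intro cSup_least) force+
    then show ?thesis using True False by (simp add: cut_hi_def)
  next
    case F2: False
    then have l: "0 < lam" using assms by auto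
    note cl = cut_set_props[OF assms(1) l] 
    have "bdd_above {t. p t \<ge> lam}" using cl(2) assms by (meson bdd_above_Ioo bdd_above_mono order_trans)
    moreover have "{t. p t \<ge> mu} \<subseteq> {t. p t \<ge> lam}" using assms by auto
    ultimately have "Sup {t. p t \<ge> mu} \<le> Sup {t. p t \<ge> lam}"
      using cm(1) by (intro cSup_subset_mono) auto
    then show ?thesis using False F2 by (simp add: cut_hi_def)
  qed
qed

lemma dev_set_props:
  assumes "dev_poss p G" "0 < lam" "lam \<le> 1"
  shows "0 \<in> {t. t \<ge> 0 \<and> p t \<ge> lam}" "{t. t \<ge> 0 \<and> p t \<ge> lam} \<subseteq> {0..G}"
proof -
  show "0 \<in> {t. t \<ge> 0 \<and> p t \<ge> lam}" using assms by (auto simp: dev_poss_def)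
  show "{t. t \<ge> 0 \<and> p t \<ge> lam} \<subseteq> {0..G}"
  proof
    fix t assume t: "t \<in> {t. t \<ge> 0 \<and> p t \<ge> lam}"
    show "t \<in> {0..G}"
    proof (rule ccontr)
      assume "t \<notin> {0..G}"
      then have "t \<ge> G" using t by auto
      then have "p t = 0" using assms(1) by (auto simp: dev_poss_def)
      then show False using t assms(2) by auto
    qed
  qed
qed

lemma dev_hi_nonneg:
  assumes "dev_poss p G" "0 \<le> lam" "lam \<le> 1"
  shows "0 \<le> dev_hi p G lam"
proof (cases "lam = 0")
  case True then show ?thesis using assms by (simp add: dev_hi_def dev_poss_def)
next
  case False
  with assms have l: "0 < lam" by auto
  note c = dev_set_props[OF assms(1) l assms(3)]
  have "bdd_above {t. t \<ge> 0 \<and> p t \<ge> lam}" using c(2) by (meson bdd_above_Icc bdd_above_mono)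
  then show ?thesis using False c(1) by (simp add: dev_hi_def cSup_upper)
qed

lemma dev_hi_pos:
  assumes "dev_poss p G" "0 \<le> lam" "lam < 1"
  shows "0 < dev_hi p G lam"
proof (cases "lam = 0")
  case True then show ?thesis using assms by (simp add: dev_hi_def dev_poss_def)
next
  case False
  with assms have l: "0 < lam" by auto
  note c = dev_set_props[OF assms(1) l] 
  have G: "G > 0" "continuous_on {0..G} p" "p G = 0" "p 0 = 1"
    using assms(1) unfolding dev_poss_def by (auto intro: continuous_on_subset)
  obtain t where t: "0 \<le> t" "t \<le> G" "p t = lam"
    using IVT2'[of p G lam 0] G l assms(3) by auto
  have "t \<noteq> 0" using t G assms(3) by auto
  have "bdd_above {t. t \<ge> 0 \<and> p t \<ge> lam}" using c(2) assms by (meson bdd_above_Icc bdd_above_mono less_imp_le)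
  then have "t \<le> dev_hi p G lam" using False t by (simp add: dev_hi_def cSup_upper)
  then show ?thesis using \<open>t \<noteq> 0\<close> t by auto
qed

lemma dev_hi_mono:
  assumes "dev_poss p G" "0 \<le> lam" "lam \<le> mu" "mu \<le> 1"
  shows "dev_hi p G mu \<le> dev_hi p G lam"
proof (cases "mu = 0")
  case True then show ?thesis using assms by simp
next
  case False
  then have m: "0 < mu" using assms by auto
  note cm = dev_set_props[OF assms(1) m assms(4)]
  show ?thesis
  proof (cases "lam = 0")
    case True
    have "Sup {t. t \<ge> 0 \<and> p t \<ge> mu} \<le> G"
      using cm by (intro cSup_least) force+
    then show ?thesis using True False by (simp add: dev_hi_def)
  next
    case F2: False
    then have l: "0 < lam" using assms by auto
    note cl = dev_set_props[OF assms(1) l] 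
    have "bdd_above {t. t \<ge> 0 \<and> p t \<ge> lam}" using cl(2) assms by (meson bdd_above_Icc bdd_above_mono order_trans)
    moreover have "{t. t \<ge> 0 \<and> p t \<ge> mu} \<subseteq> {t. t \<ge> 0 \<and> p t \<ge> lam}" using assms by auto
    ultimately have "Sup {t. t \<ge> 0 \<and> p t \<ge> mu} \<le> Sup {t. t \<ge> 0 \<and> p t \<ge> lam}"
      using cm(1) by (intro cSup_subset_mono) auto
    then show ?thesis using False F2 by (simp add: dev_hi_def)
  qed
qed



lemma box_ell_closed:
  fixes B :: "real^'n::finite^'n" and ah :: "real^'n"
  shows "closed {a. (\<forall>j. L j \<le> a $ j \<and> a $ j \<le> U j) \<and> norm (B *v (a - ah)) \<le> d}"
proof -
  have l: "continuous_on UNIV ((*v) B)"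
    by (rule linear_continuous_on) (simp add: linear_linear matrix_vector_mul_linear)
  have c0: "continuous_on UNIV (\<lambda>a::real^'n. B *v (a - ah))"
    using continuous_on_compose2[OF l, of UNIV "\<lambda>a. a - ah"] by (simp add: continuous_on_diff continuous_on_id continuous_on_const)
  have c: "continuous_on UNIV (\<lambda>a::real^'n. norm (B *v (a - ah)))"
    using c0 by (intro continuous_intros)
  show ?thesis
    by (intro closed_Collect_conj closed_Collect_all closed_Collect_le continuous_intros c)
qed

lemma box_ell_bounded:
  fixes B :: "real^'n::finite^'n" and ah :: "real^'n"
  shows "bounded {a. (\<forall>j. L j \<le> a $ j \<and> a $ j \<le> U j) \<and> norm (B *v (a - ah)) \<le> d}"
proof -
  have "norm a \<le> (\<Sum>j\<in>UNIV. \<bar>L j\<bar> + \<bar>U j\<bar>)" if "\<forall>j. L j \<le> a $ j \<and> a $ j \<le> U j" for a :: "real^'n"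
  proof -
    have "norm a \<le> (\<Sum>j\<in>UNIV. \<bar>a$j\<bar>)" by (rule norm_le_l1_cart)
    also have "\<dots> \<le> (\<Sum>j\<in>UNIV. \<bar>L j\<bar> + \<bar>U j\<bar>)"
    proof (intro sum_mono)
      fix j from that have "L j \<le> a$j" "a$j \<le> U j" by auto
      then show "\<bar>a$j\<bar> \<le> \<bar>L j\<bar> + \<bar>U j\<bar>" by linarith
    qed
    finally show ?thesis .
  qed
  then show ?thesis unfolding bounded_iff by blast
qed



lemma max_bound: "L \<le> (t::real) \<Longrightarrow> t \<le> U \<Longrightarrow> t * c \<le> max (L * c) (U * c)"
  by (cases "c \<ge> 0") (auto intro: mult_right_mono mult_right_mono_neg simp: max_def)

lemma inner_transp: "(a::real^'n::finite) \<bullet> (w v* B) = w \<bullet> (B *v a)"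
  by (metis dot_lmul_matrix inner_commute)

lemma dual_box_ell:
  fixes B :: "real^'n::finite^'n" and ah x :: "real^'n" and L U :: "'n \<Rightarrow> real"
  assumes box: "\<forall>j. L j \<le> ah$j \<and> ah$j \<le> U j" and d: "0 < d"
  shows "(\<forall>a. (\<forall>j. L j \<le> a$j \<and> a$j \<le> U j) \<and> norm (B *v (a - ah)) \<le> d \<longrightarrow> a \<bullet> x \<le> s) \<longleftrightarrow>
   (\<exists>w. (\<Sum>j\<in>UNIV. max (L j * (x - transpose B *v w)$j) (U j * (x - transpose B *v w)$j))
         + (B *v ah) \<bullet> w + d * norm w \<le> s)" (is "?P \<longleftrightarrow> ?Q")
proof
  assume ?Q
  then obtain w where w: "(\<Sum>j\<in>UNIV. max (L j * (x - transpose B *v w)$j) (U j * (x - transpose B *v w)$j))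
         + (B *v ah) \<bullet> w + d * norm w \<le> s" by blast
  define c where "c = x - transpose B *v w"
  show ?P
  proof (intro allI impI)
    fix a :: "real^'n" assume a: "(\<forall>j. L j \<le> a$j \<and> a$j \<le> U j) \<and> norm (B *v (a - ah)) \<le> d"
    have "a \<bullet> x = a \<bullet> c + w \<bullet> (B *v a)" by (simp add: c_def inner_diff_right inner_transp)
    also have "a \<bullet> c = (\<Sum>j\<in>UNIV. a$j * c$j)" by (simp add: inner_vec_def)
    also have "\<dots> \<le> (\<Sum>j\<in>UNIV. max (L j * c$j) (U j * c$j))"
      using a by (intro sum_mono max_bound) auto
    also have "w \<bullet> (B *v a) = w \<bullet> (B *v ah) + w \<bullet> (B *v (a - ah))"
      by (simp add: matrix_vector_mult_diff_distrib inner_diff_right)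
    also have "w \<bullet> (B *v (a - ah)) \<le> norm w * norm (B *v (a - ah))" by (rule norm_cauchy_schwarz)
    also have "\<dots> \<le> norm w * d" using a by (intro mult_left_mono) auto
    finally show "a \<bullet> x \<le> s" using w by (simp add: c_def inner_commute algebra_simps)
  qed
next
  assume P: ?P
  define bx where "bx = cbox (\<chi> j. L j) (\<chi> j. U j)"
  have bx_iff: "a \<in> bx \<longleftrightarrow> (\<forall>j. L j \<le> a$j \<and> a$j \<le> U j)" for a
    by (simp add: bx_def mem_box_cart)
  define f where "f = (\<lambda>a::real^'n. (B *v a, a \<bullet> x))"
  have lf: "linear f" unfolding f_def
    by (rule linearI) (auto simp: matrix_vector_right_distrib inner_add_left matrix_vector_mult_scaleR)
  define S where "S = (+) (- (B *v ah), 0) ` (f ` bx)"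
  define T where "T = cball (0::real^'n) d \<times> {s<..}"
  have cS: "convex S" unfolding S_def
    by (intro convex_translation convex_linear_image lf) (simp add: bx_def convex_box)
  have cT: "convex T" unfolding T_def by (intro convex_Times convex_cball convex_real_interval)
  have ahbx: "ah \<in> bx" using box bx_iff by auto
  have Sne: "S \<noteq> {}" using ahbx by (auto simp: S_def)
  have Tne: "T \<noteq> {}" using d by (auto simp: T_def intro!: exI[of _ "s+1"])
  have Smem: "(B *v (a - ah), a \<bullet> x) \<in> S" if "a \<in> bx" for a
    using that unfolding S_def f_def
    by (auto simp: image_iff matrix_vector_mult_diff_distrib intro!: bexI[of _ a])
  have Smem': "\<exists>a\<in>bx. p = (B *v (a - ah), a \<bullet> x)" if "p \<in> S" for p
    using that unfolding S_def f_def
    by (auto simp: image_iff matrix_vector_mult_diff_distrib)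
  have disj: "S \<inter> T = {}"
  proof (rule ccontr)
    assume "S \<inter> T \<noteq> {}"
    then obtain p where "p \<in> S" "p \<in> T" by blast
    then obtain a where a: "a \<in> bx" "p = (B *v (a - ah), a \<bullet> x)" using Smem' by blast
    with \<open>p \<in> T\<close> have "norm (B *v (a - ah)) \<le> d" "s < a \<bullet> x" by (auto simp: T_def)
    with P a bx_iff show False by force
  qed
  obtain W beta where W: "W \<noteq> 0" "\<forall>p\<in>S. W \<bullet> p \<le> beta" "\<forall>p\<in>T. W \<bullet> p \<ge> beta"
    using separating_hyperplane_sets[OF cS cT Sne Tne disj] by blast
  obtain w' mu where Wd: "W = (w', mu)" by (cases W)
  have Sineq: "w' \<bullet> (B *v (a - ah)) + mu * (a \<bullet> x) \<le> beta" if "a \<in> bx" for a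
    using W(2) Smem[OF that] Wd by auto
  have Tineq: "beta \<le> w' \<bullet> z + mu * t" if "norm z \<le> d" "s < t" for z t
    using W(3) that Wd by (auto simp: T_def)
  have mu0: "mu \<ge> 0"
  proof (rule ccontr)
    assume "\<not> mu \<ge> 0"
    then have m: "mu < 0" by simp
    define t where "t = max (s+1) (beta / mu + 1)"
    have "beta \<le> mu * t" using Tineq[of 0 t] d by (auto simp: t_def)
    moreover have "mu * t \<le> mu * (beta/mu + 1)" using m by (intro mult_left_mono_neg) (auto simp: t_def)
    moreover have "mu * (beta/mu + 1) = beta + mu" using m by (simp add: field_simps)
    ultimately show False using m by linarith
  qed
  define z0 where "z0 = - (d / norm w') *\<^sub>R w'"
  have z0n: "norm z0 \<le> d" using d by (cases "w' = 0") (auto simp: z0_def)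
  have z0i: "w' \<bullet> z0 = - d * norm w'"
    by (cases "w' = 0") (auto simp: z0_def power2_norm_eq_inner[symmetric] power2_eq_square)
  have bnd: "beta \<le> - d * norm w' + mu * s"
  proof (rule ccontr)
    assume "\<not> ?thesis"
    then have g: "beta - (- d * norm w' + mu * s) > 0" by simp
    define e where "e = (beta - (- d * norm w' + mu * s)) / (mu + 1)"
    have e: "e > 0" using g mu0 by (simp add: e_def)
    have "mu * e < beta - (- d * norm w' + mu * s)"
    proof -
      have "mu * e = (mu / (mu + 1)) * (beta - (- d * norm w' + mu * s))" using mu0 by (simp add: e_def)
      also have "\<dots> < 1 * (beta - (- d * norm w' + mu * s))"
        using g mu0 by (intro mult_strict_right_mono) auto
      finally show ?thesis by simp
    qed
    moreover have "beta \<le> w' \<bullet> z0 + mu * (s + e)" using Tineq[OF z0n] e by auto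
    ultimately show False using z0i by (simp add: algebra_simps)
  qed
  have mupos: "mu > 0"
  proof (rule ccontr)
    assume "\<not> mu > 0"
    then have "mu = 0" using mu0 by simp
    then have "0 \<le> beta" using Sineq[OF ahbx] by simp
    with bnd \<open>mu = 0\<close> have "d * norm w' \<le> 0" by simp
    then have "w' = 0" using d by (simp add: mult_le_0_iff)
    with \<open>mu = 0\<close> Wd W(1) show False by (simp add: zero_prod_def)
  qed
  define w where "w = - (1/mu) *\<^sub>R w'"
  define c where "c = x - transpose B *v w"
  have key: "a \<bullet> c + (B *v ah) \<bullet> w + d * norm w \<le> s" if "a \<in> bx" for a
  proof -
    have "w' \<bullet> (B *v (a - ah)) + mu * (a \<bullet> x) \<le> - d * norm w' + mu * s"
      using Sineq[OF that] bnd by linarith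
    then have "(1/mu) * (w' \<bullet> (B *v (a - ah)) + mu * (a \<bullet> x)) \<le> (1/mu) * (- d * norm w' + mu * s)"
      using mupos by (intro mult_left_mono) auto
    then have i: "(1/mu) * (w' \<bullet> (B *v (a - ah))) + a \<bullet> x \<le> - d * ((1/mu) * norm w') + s"
      using mupos by (simp add: algebra_simps)
    have nw: "norm w = (1/mu) * norm w'" using mupos by (simp add: w_def)
    have iw: "(1/mu) * (w' \<bullet> (B *v (a - ah))) = - (w \<bullet> (B *v a)) + (B *v ah) \<bullet> w"
      by (simp add: w_def matrix_vector_mult_diff_distrib inner_diff_right inner_commute algebra_simps)
    have "a \<bullet> c = a \<bullet> x - w \<bullet> (B *v a)" by (simp add: c_def inner_diff_right inner_transp)
    moreover have "d * norm w = d * ((1/mu) * norm w')" using nw by simp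
    ultimately show ?thesis using i iw by linarith
  qed
  define a0 where "a0 = (\<chi> j. if c$j \<ge> 0 then U j else L j)"
  have LU: "L j \<le> U j" for j using box by (meson order_trans)
  have a0bx: "a0 \<in> bx" using LU by (simp add: bx_iff a0_def)
  have "a0 \<bullet> c = (\<Sum>j\<in>UNIV. max (L j * c$j) (U j * c$j))"
    unfolding inner_vec_def
  proof (intro sum.cong refl)
    fix j
    show "a0$j \<bullet> c$j = max (L j * c$j) (U j * c$j)"
      using LU[of j] by (cases "c$j \<ge> 0")
        (auto simp: a0_def max_def intro: mult_right_mono mult_right_mono_neg)
  qed
  then show ?Q using key[OF a0bx] by (auto simp: c_def)
qed



lemma telescope_id:
  fixes M :: "nat \<Rightarrow> real"
  shows "L * M 0 + (\<Sum>i<n. (M (Suc i) - M i) * (L - real (Suc i))) = (\<Sum>i<Suc n. M i) + (L - real (Suc n)) * M n"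
  by (induction n) (simp_all add: algebra_simps)

lemma lower_part:
  fixes C :: "real \<Rightarrow> (real^'n::finite) set" and a :: "nat \<Rightarrow> real^'n"
  assumes l: "l \<ge> 1"
    and nest: "\<And>i j. i \<le> j \<Longrightarrow> j \<le> l \<Longrightarrow> C (real j / real l) \<subseteq> C (real i / real l)"
    and mem: "\<And>i. i < l \<Longrightarrow> a i \<in> C (real i / real l)"
    and meas: "\<And>i. i \<le> l \<Longrightarrow> C (real i / real l) \<in> sets borel"
  shows "distr (measure_pmf (pmf_of_set {..<l})) borel a \<in> amb_set l C"
    and "integral\<^sup>L (distr (measure_pmf (pmf_of_set {..<l})) borel a) (\<lambda>v. v \<bullet> x) = (\<Sum>i<l. a i \<bullet> x) / real l"
proof -
  define Q where "Q = measure_pmf (pmf_of_set {..<l})"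
  have ne: "{..<l} \<noteq> {}" using l by (auto simp: lessThan_empty_iff)
  have am: "a \<in> measurable Q borel" by (simp add: Q_def)
  have ps: "prob_space (distr Q borel a)"
    using am by (simp add: Q_def measure_pmf.prob_space_distr)
  have "measure (distr Q borel a) (C (real i / real l)) \<ge> 1 - real i / real l" if i: "i \<in> {0..l}" for i
  proof -
    have "measure (distr Q borel a) (C (real i / real l)) = measure Q (a -` C (real i / real l))"
      using meas[of i] i am by (simp add: measure_distr Q_def)
    also have "\<dots> = real (card ({..<l} \<inter> a -` C (real i / real l))) / real l"
      unfolding Q_def using ne by (simp add: measure_pmf_of_set)
    also have "\<dots> \<ge> real (card {i..<l}) / real l"
    proof -
      have "{i..<l} \<subseteq> {..<l} \<inter> a -` C (real i / real l)"
      proof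
        fix k assume k: "k \<in> {i..<l}"
        then have "a k \<in> C (real k / real l)" using mem by auto
        moreover have "C (real k / real l) \<subseteq> C (real i / real l)" using k by (intro nest) auto
        ultimately show "k \<in> {..<l} \<inter> a -` C (real i / real l)" using k by auto
      qed
      then have "card {i..<l} \<le> card ({..<l} \<inter> a -` C (real i / real l))"
        by (intro card_mono) auto
      then show ?thesis by (intro divide_right_mono) auto
    qed
    finally have "measure (distr Q borel a) (C (real i / real l)) \<ge> real (l - i) / real l" by simp
    moreover have "real (l - i) / real l = 1 - real i / real l" using i l by (simp add: of_nat_diff field_simps)
    ultimately show ?thesis by simp
  qed
  then show "distr (measure_pmf (pmf_of_set {..<l})) borel a \<in> amb_set l C"
    using ps by (simp add: amb_set_def Q_def)
  have "integral\<^sup>L (distr Q borel a) (\<lambda>v. v \<bullet> x) = integral\<^sup>L Q (\<lambda>i. a i \<bullet> x)"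
    using am by (intro integral_distr) auto
  also have "\<dots> = (\<Sum>i<l. a i \<bullet> x) / real l"
    unfolding Q_def using ne by (simp add: integral_pmf_of_set)
  finally show "integral\<^sup>L (distr (measure_pmf (pmf_of_set {..<l})) borel a) (\<lambda>v. v \<bullet> x) = (\<Sum>i<l. a i \<bullet> x) / real l"
    by (simp add: Q_def)
qed



lemma upper_part:
  fixes C :: "real \<Rightarrow> (real^'n::finite) set" and a :: "nat \<Rightarrow> real^'n"
  assumes l: "l \<ge> 1"
    and nest: "\<And>i j. i \<le> j \<Longrightarrow> j \<le> l \<Longrightarrow> C (real j / real l) \<subseteq> C (real i / real l)"
    and mem: "\<And>i. i < l \<Longrightarrow> a i \<in> C (real i / real l)"
    and mx: "\<And>i b. i < l \<Longrightarrow> b \<in> C (real i / real l) \<Longrightarrow> b \<bullet> x \<le> a i \<bullet> x"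
    and meas: "\<And>i. i \<le> l \<Longrightarrow> C (real i / real l) \<in> sets borel"
    and bdd: "bounded (C (real 0 / real l))"
    and P: "P \<in> amb_set l C"
  shows "integral\<^sup>L P (\<lambda>v. v \<bullet> x) \<le> (\<Sum>i<l. a i \<bullet> x) / real l"
proof -
  obtain l' where l': "l = Suc l'" using l by (cases l) auto
  define Ci where "Ci i = C (real i / real l)" for i
  define Mi where "Mi i = a i \<bullet> x" for i
  have sP: "sets P = sets borel" and ps: "prob_space P"
    and mP: "\<And>i. i \<le> l \<Longrightarrow> measure P (Ci i) \<ge> 1 - real i / real l"
    using P by (auto simp: amb_set_def Ci_def)
  interpret prob_space P by (rule ps)
  have spP: "space P = UNIV" using sets_eq_imp_space_eq[OF sP] by simp
  have Cs: "Ci i \<in> sets P" if "i \<le> l" for i using meas[OF that] sP by (simp add: Ci_def)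
  have "prob (Ci 0) \<ge> 1" using mP[of 0] by simp
  then have "prob (Ci 0) = 1" using prob_le_1 by (intro antisym) auto
  then have AE0: "AE v in P. v \<in> Ci 0" using AE_in_set_eq_1[OF Cs[of 0]] by simp
  have "continuous_on UNIV (\<lambda>v::real^'n. v \<bullet> x)" by (intro continuous_intros)
  then have "(\<lambda>v::real^'n. v \<bullet> x) \<in> borel_measurable borel" by (rule borel_measurable_continuous_onI)
  then have fm: "(\<lambda>v. v \<bullet> x) \<in> borel_measurable P"
    by (subst measurable_cong_sets[OF sP refl])
  obtain R where R: "\<And>v. v \<in> Ci 0 \<Longrightarrow> norm v \<le> R" using bdd unfolding bounded_iff Ci_def by auto
  have "AE v in P. norm (v \<bullet> x) \<le> R * norm x"
    using AE0
  proof (rule AE_mp, intro AE_I2 impI)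
    fix v assume "v \<in> Ci 0"
    then have "norm v \<le> R" by (rule R)
    have "norm (v \<bullet> x) \<le> norm v * norm x" by (simp add: Cauchy_Schwarz_ineq2)
    also have "\<dots> \<le> R * norm x" using \<open>norm v \<le> R\<close> by (intro mult_right_mono) auto
    finally show "norm (v \<bullet> x) \<le> R * norm x" .
  qed
  then have intf: "integrable P (\<lambda>v. v \<bullet> x)" using fm by (intro integrable_const_bound)
  define g where "g v = Mi 0 + (\<Sum>i<l'. (Mi (Suc i) - Mi i) * indicator (Ci (Suc i)) v)" for v
  have ii: "integrable P (\<lambda>v. (Mi (Suc i) - Mi i) * indicator (Ci (Suc i)) v)" if "i < l'" for i
  proof -
    have "Ci (Suc i) \<in> sets P" using Cs[of "Suc i"] that l' by simp
    then have "integrable P (indicator (Ci (Suc i)) :: _ \<Rightarrow> real)"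
      by (intro integrable_real_indicator) (simp_all add: less_top[symmetric] emeasure_finite)
    then show ?thesis by (rule integrable_mult_right)
  qed
  have isum: "integrable P (\<lambda>v. \<Sum>i<l'. (Mi (Suc i) - Mi i) * indicator (Ci (Suc i)) v)"
    using ii by (intro Bochner_Integration.integrable_sum) auto
  have intg: "integrable P g" unfolding g_def
    by (rule Bochner_Integration.integrable_add[OF integrable_const isum])
  have fg: "AE v in P. v \<bullet> x \<le> g v"
    using AE0
  proof (rule AE_mp, intro AE_I2 impI)
    fix v assume v0: "v \<in> Ci 0"
    define K where "K = {i. i < l \<and> v \<in> Ci i}"
    have Kf: "finite K" by (auto simp: K_def)
    have K0: "0 \<in> K" using v0 l by (auto simp: K_def)
    define k where "k = Max K"
    have kK: "k \<in> K" using Kf K0 unfolding k_def by (intro Max_in) auto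
    have kle: "i \<le> k" if "i \<in> K" for i using Kf that by (simp add: k_def)
    have kl: "k \<le> l'" using kK l' by (auto simp: K_def)
    have ind: "indicator (Ci (Suc i)) v = (if i < k then 1 else 0 :: real)" if "i < l'" for i
    proof (cases "i < k")
      case True
      have "Ci k \<subseteq> Ci (Suc i)" unfolding Ci_def using True kl l' by (intro nest) auto
      then show ?thesis using True kK by (auto simp: K_def)
    next
      case False
      have "v \<notin> Ci (Suc i)"
      proof
        assume "v \<in> Ci (Suc i)"
        then have "Suc i \<in> K" using that l' by (auto simp: K_def)
        then show False using kle False by fastforce
      qed
      then show ?thesis using False by simp
    qed
    have "(\<Sum>i<l'. (Mi (Suc i) - Mi i) * indicator (Ci (Suc i)) v)
        = (\<Sum>i<l'. if i < k then Mi (Suc i) - Mi i else 0)"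
      by (intro sum.cong refl) (simp add: ind)
    also have "\<dots> = (\<Sum>i\<in>{..<l'} \<inter> {i. i < k}. Mi (Suc i) - Mi i)"
      by (simp add: sum.inter_restrict)
    also have "{..<l'} \<inter> {i. i < k} = {..<k}" using kl by auto
    also have "(\<Sum>i<k. Mi (Suc i) - Mi i) = Mi k - Mi 0" by (rule sum_lessThan_telescope)
    finally have gv: "g v = Mi k" by (simp add: g_def)
    have "v \<bullet> x \<le> Mi k" using kK mx by (auto simp: K_def Ci_def Mi_def)
    then show "v \<bullet> x \<le> g v" using gv by simp
  qed
  have "integral\<^sup>L P (\<lambda>v. v \<bullet> x) \<le> integral\<^sup>L P g"
    by (rule integral_mono_AE[OF intf intg fg])
  also have "integral\<^sup>L P g = Mi 0 + (\<Sum>i<l'. (Mi (Suc i) - Mi i) * measure P (Ci (Suc i)))"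
  proof -
    have "integral\<^sup>L P g = integral\<^sup>L P (\<lambda>v. Mi 0) + integral\<^sup>L P (\<lambda>v. \<Sum>i<l'. (Mi (Suc i) - Mi i) * indicator (Ci (Suc i)) v)"
      unfolding g_def by (rule Bochner_Integration.integral_add[OF integrable_const isum])
    also have "integral\<^sup>L P (\<lambda>v. \<Sum>i<l'. (Mi (Suc i) - Mi i) * indicator (Ci (Suc i)) v)
        = (\<Sum>i<l'. integral\<^sup>L P (\<lambda>v. (Mi (Suc i) - Mi i) * indicator (Ci (Suc i)) v))"
      using ii by (intro Bochner_Integration.integral_sum) auto
    also have "\<dots> = (\<Sum>i<l'. (Mi (Suc i) - Mi i) * measure P (Ci (Suc i)))"
      by (intro sum.cong refl) (simp add: spP)
    finally show ?thesis by (simp add: prob_space)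
  qed
  also have "\<dots> \<le> Mi 0 + (\<Sum>i<l'. (Mi (Suc i) - Mi i) * (1 - real (Suc i) / real l))"
  proof (intro add_left_mono sum_mono mult_left_mono_neg)
    fix i assume i: "i \<in> {..<l'}"
    show "1 - real (Suc i) / real l \<le> measure P (Ci (Suc i))" using mP[of "Suc i"] i l' by auto
    have "a (Suc i) \<in> Ci i"
      using mem[of "Suc i"] nest[of i "Suc i"] i l' by (auto simp: Ci_def)
    then show "Mi (Suc i) - Mi i \<le> 0" using mx[of i "a (Suc i)"] i l' by (auto simp: Ci_def Mi_def)
  qed
  also have "\<dots> = (\<Sum>i<l. Mi i) / real l"
  proof -
    have "real l * (Mi 0 + (\<Sum>i<l'. (Mi (Suc i) - Mi i) * (1 - real (Suc i) / real l)))
        = real l * Mi 0 + (\<Sum>i<l'. (Mi (Suc i) - Mi i) * (real l - real (Suc i)))"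
    proof -
      have lp: "real l > 0" using l by simp
      have "real l * (\<Sum>i<l'. (Mi (Suc i) - Mi i) * (1 - real (Suc i) / real l))
          = (\<Sum>i<l'. real l * ((Mi (Suc i) - Mi i) * (1 - real (Suc i) / real l)))"
        by (simp add: sum_distrib_left)
      also have "\<dots> = (\<Sum>i<l'. (Mi (Suc i) - Mi i) * (real l - real (Suc i)))"
        using lp by (intro sum.cong refl) (simp add: field_simps)
      finally show ?thesis by (simp add: distrib_left)
    qed
    also have "\<dots> = (\<Sum>i<l. Mi i)" using telescope_id[of "real l" Mi l'] l' by simp
    finally show ?thesis using l by (simp add: field_simps)
  qed
  finally show ?thesis by (simp add: Mi_def)
qed



lemma worst_exp_eq:
  fixes C :: "real \<Rightarrow> (real^'n::finite) set"
  assumes l: "l \<ge> 1"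
    and nest: "\<And>i j. i \<le> j \<Longrightarrow> j \<le> l \<Longrightarrow> C (real j / real l) \<subseteq> C (real i / real l)"
    and comp: "\<And>i. i \<le> l \<Longrightarrow> compact (C (real i / real l))"
    and ne: "\<And>i. i \<le> l \<Longrightarrow> C (real i / real l) \<noteq> {}"
  shows "\<exists>a. (\<forall>i<l. a i \<in> C (real i / real l) \<and> (\<forall>b\<in>C (real i / real l). b \<bullet> x \<le> a i \<bullet> x))
            \<and> worst_exp (amb_set l C) x = (\<Sum>i<l. a i \<bullet> x) / real l"
proof -
  have "\<forall>i. \<exists>a. i < l \<longrightarrow> a \<in> C (real i / real l) \<and> (\<forall>b\<in>C (real i / real l). b \<bullet> x \<le> a \<bullet> x)"
  proof
    fix i
    show "\<exists>a. i < l \<longrightarrow> a \<in> C (real i / real l) \<and> (\<forall>b\<in>C (real i / real l). b \<bullet> x \<le> a \<bullet> x)"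
    proof (cases "i < l")
      case True
      have "continuous_on (C (real i / real l)) (\<lambda>b. b \<bullet> x)" by (intro continuous_intros)
      then obtain a0 where "a0 \<in> C (real i / real l)" "\<forall>b\<in>C (real i / real l). b \<bullet> x \<le> a0 \<bullet> x"
        using continuous_attains_sup[OF comp[of i] ne[of i]] True by fastforce
      then show ?thesis by blast
    qed auto
  qed
  then obtain a where a: "\<And>i. i < l \<Longrightarrow> a i \<in> C (real i / real l) \<and> (\<forall>b\<in>C (real i / real l). b \<bullet> x \<le> a i \<bullet> x)"
    by metis
  have meas: "\<And>i. i \<le> l \<Longrightarrow> C (real i / real l) \<in> sets borel"
    using comp by (simp add: borel_closed compact_imp_closed)
  have bdd: "bounded (C (real 0 / real l))" using comp[of 0] by (simp add: compact_imp_bounded)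
  have mem: "\<And>i. i < l \<Longrightarrow> a i \<in> C (real i / real l)" using a by blast
  have mx: "\<And>i b. i < l \<Longrightarrow> b \<in> C (real i / real l) \<Longrightarrow> b \<bullet> x \<le> a i \<bullet> x" using a by blast
  note lp = lower_part(1)[of l C a, OF l nest mem meas] lower_part(2)[of l C a x, OF l nest mem meas]
  have "worst_exp (amb_set l C) x = (\<Sum>i<l. a i \<bullet> x) / real l"
    unfolding worst_exp_def
  proof (rule cSup_eq_maximum)
    show "(\<Sum>i<l. a i \<bullet> x) / real l \<in> (\<lambda>P. integral\<^sup>L P (\<lambda>a. a \<bullet> x)) ` amb_set l C"
      using lp a by (auto intro!: image_eqI[of _ _ "distr (measure_pmf (pmf_of_set {..<l})) borel a"])
    fix y assume "y \<in> (\<lambda>P. integral\<^sup>L P (\<lambda>a. a \<bullet> x)) ` amb_set l C"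
    then obtain P where "P \<in> amb_set l C" "y = integral\<^sup>L P (\<lambda>a. a \<bullet> x)" by blast
    then show "y \<le> (\<Sum>i<l. a i \<bullet> x) / real l"
      using upper_part[of l C a x, OF l nest mem mx meas bdd] by auto
  qed
  then show ?thesis using a by blast
qed




definition Dobj :: "real^'n::finite^'n \<Rightarrow> real^'n \<Rightarrow> ('n \<Rightarrow> real) \<Rightarrow> ('n \<Rightarrow> real) \<Rightarrow> real \<Rightarrow> real^'n \<Rightarrow> real^'n \<Rightarrow> real" where
  "Dobj B ah L U d x w = (\<Sum>j\<in>UNIV. max (L j * (x - transpose B *v w)$j) (U j * (x - transpose B *v w)$j))
         + (B *v ah) \<bullet> w + d * norm w"

lemma constraint_char:
  fixes ah :: "real^'n::finite" and B :: "real^'n^'n"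
  assumes l: "l \<ge> 1"
    and mp: "\<And>j. marg_poss (pa j) (ah $ j) (lo j) (hi j)"
    and dp: "dev_poss pd G"
  shows "worst_exp (amb_set l (Cset pa ah lo hi pd G B)) x \<le> b \<longleftrightarrow>
    (\<exists>w::nat \<Rightarrow> real^'n. (\<Sum>i<l. Dobj B ah (\<lambda>j. cut_lo (pa j) (ah $ j) (lo j) (real i / real l))
        (\<lambda>j. cut_hi (pa j) (ah $ j) (hi j) (real i / real l)) (dev_hi pd G (real i / real l)) x (w i)) \<le> real l * b)"
proof -
  define C where "C = Cset pa ah lo hi pd G B"
  define Lf where "Lf i j = cut_lo (pa j) (ah $ j) (lo j) (real i / real l)" for i j
  define Uf where "Uf i j = cut_hi (pa j) (ah $ j) (hi j) (real i / real l)" for i j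
  define df where "df i = dev_hi pd G (real i / real l)" for i
  have Ceq: "C (real i / real l) = {a. (\<forall>j. Lf i j \<le> a $ j \<and> a $ j \<le> Uf i j) \<and> norm (B *v (a - ah)) \<le> df i}" for i
    by (simp add: C_def Cset_def Lf_def Uf_def df_def)
  have lam: "0 \<le> real i / real l" "i \<le> l \<Longrightarrow> real i / real l \<le> 1" for i using l by auto
  have ahbox: "\<forall>j. Lf i j \<le> ah $ j \<and> ah $ j \<le> Uf i j" if "i \<le> l" for i
    using cut_lo_le[OF mp lam(1) lam(2)[OF that]] cut_hi_ge[OF mp lam(1) lam(2)[OF that]]
    by (simp add: Lf_def Uf_def)
  have dpos: "df i > 0" if "i < l" for i
  proof -
    have "real i / real l < 1" using that l by simp
    then show ?thesis using dev_hi_pos[OF dp lam(1)] by (simp add: df_def)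
  qed
  have dnn: "df i \<ge> 0" if "i \<le> l" for i using dev_hi_nonneg[OF dp lam(1) lam(2)[OF that]] by (simp add: df_def)
  have nest: "C (real j / real l) \<subseteq> C (real i / real l)" if "i \<le> j" "j \<le> l" for i j
  proof -
    have ij: "real i / real l \<le> real j / real l" using that by (simp add: divide_right_mono)
    have m1: "Lf i k \<le> Lf j k" "Uf j k \<le> Uf i k" for k
      using cut_lo_mono[OF mp lam(1) ij lam(2)[OF that(2)]] cut_hi_mono[OF mp lam(1) ij lam(2)[OF that(2)]]
      by (auto simp: Lf_def Uf_def)
    have m2: "df j \<le> df i"
      using dev_hi_mono[OF dp lam(1) ij lam(2)[OF that(2)]] by (simp add: df_def)
    show ?thesis
    proof
      fix v assume "v \<in> C (real j / real l)"
      then have v: "\<And>k. Lf j k \<le> v$k" "\<And>k. v$k \<le> Uf j k" "norm (B *v (v - ah)) \<le> df j"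
        unfolding Ceq by auto
      have "\<forall>k. Lf i k \<le> v$k \<and> v$k \<le> Uf i k"
      proof
        fix k show "Lf i k \<le> v$k \<and> v$k \<le> Uf i k" using v(1)[of k] v(2)[of k] m1[of k] by linarith
      qed
      moreover have "norm (B *v (v - ah)) \<le> df i" using v(3) m2 by linarith
      ultimately show "v \<in> C (real i / real l)" unfolding Ceq by blast
    qed
  qed
  have comp: "compact (C (real i / real l))" if "i \<le> l" for i
    unfolding Ceq compact_eq_bounded_closed by (intro conjI box_ell_bounded box_ell_closed)
  have ne: "C (real i / real l) \<noteq> {}" if "i \<le> l" for i
    using ahbox[OF that] dnn[OF that] unfolding Ceq by auto
  obtain a where a: "\<And>i. i < l \<Longrightarrow> a i \<in> C (real i / real l) \<and> (\<forall>b\<in>C (real i / real l). b \<bullet> x \<le> a i \<bullet> x)"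
    and we: "worst_exp (amb_set l C) x = (\<Sum>i<l. a i \<bullet> x) / real l"
    using worst_exp_eq[of l C x, OF l nest comp ne] by blast
  have dual: "(\<forall>v. (\<forall>j. Lf i j \<le> v$j \<and> v$j \<le> Uf i j) \<and> norm (B *v (v - ah)) \<le> df i \<longrightarrow> v \<bullet> x \<le> s) \<longleftrightarrow>
     (\<exists>w. Dobj B ah (Lf i) (Uf i) (df i) x w \<le> s)" if "i < l" for i s
    unfolding Dobj_def by (rule dual_box_ell[OF ahbox dpos]) (use that in auto)
  have lp: "real l > 0" using l by simp
  have "worst_exp (amb_set l C) x \<le> b \<longleftrightarrow> (\<Sum>i<l. a i \<bullet> x) \<le> real l * b"
    unfolding we using lp by (simp add: divide_le_eq mult.commute)
  also have "\<dots> \<longleftrightarrow> (\<exists>w. (\<Sum>i<l. Dobj B ah (Lf i) (Uf i) (df i) x (w i)) \<le> real l * b)"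
  proof
    assume h: "(\<Sum>i<l. a i \<bullet> x) \<le> real l * b"
    have "\<forall>i. \<exists>w. i < l \<longrightarrow> Dobj B ah (Lf i) (Uf i) (df i) x w \<le> a i \<bullet> x"
    proof
      fix i show "\<exists>w. i < l \<longrightarrow> Dobj B ah (Lf i) (Uf i) (df i) x w \<le> a i \<bullet> x"
      proof (cases "i < l")
        case True
        have "\<forall>v. (\<forall>j. Lf i j \<le> v$j \<and> v$j \<le> Uf i j) \<and> norm (B *v (v - ah)) \<le> df i \<longrightarrow> v \<bullet> x \<le> a i \<bullet> x"
          using a[OF True] unfolding Ceq by blast
        then show ?thesis using dual[OF True] by blast
      qed auto
    qed
    then obtain w where w: "\<And>i. i < l \<Longrightarrow> Dobj B ah (Lf i) (Uf i) (df i) x (w i) \<le> a i \<bullet> x" by metis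
    have "(\<Sum>i<l. Dobj B ah (Lf i) (Uf i) (df i) x (w i)) \<le> (\<Sum>i<l. a i \<bullet> x)"
      by (intro sum_mono) (simp add: w)
    then show "\<exists>w. (\<Sum>i<l. Dobj B ah (Lf i) (Uf i) (df i) x (w i)) \<le> real l * b"
      using order_trans[OF _ h] by blast
  next
    assume "\<exists>w. (\<Sum>i<l. Dobj B ah (Lf i) (Uf i) (df i) x (w i)) \<le> real l * b"
    then obtain w where w: "(\<Sum>i<l. Dobj B ah (Lf i) (Uf i) (df i) x (w i)) \<le> real l * b" by blast
    have "a i \<bullet> x \<le> Dobj B ah (Lf i) (Uf i) (df i) x (w i)" if "i \<in> {..<l}" for i
    proof -
      have i: "i < l" using that by simp
      have "\<forall>v. (\<forall>j. Lf i j \<le> v$j \<and> v$j \<le> Uf i j) \<and> norm (B *v (v - ah)) \<le> df i \<longrightarrow> v \<bullet> x \<le> Dobj B ah (Lf i) (Uf i) (df i) x (w i)"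
        using dual[OF i, of "Dobj B ah (Lf i) (Uf i) (df i) x (w i)"] by blast
      then show ?thesis using a[OF i] unfolding Ceq by blast
    qed
    then have "(\<Sum>i<l. a i \<bullet> x) \<le> (\<Sum>i<l. Dobj B ah (Lf i) (Uf i) (df i) x (w i))" by (rule sum_mono)
    then show "(\<Sum>i<l. a i \<bullet> x) \<le> real l * b" using w by linarith
  qed
  finally show ?thesis by (simp add: C_def df_def Lf_def[abs_def] Uf_def[abs_def])
qed



definition yv :: "nat \<Rightarrow> 'n::finite aff" where "yv k = (0, (\<lambda>n. if n = k then 1 else 0), 0)"
definition xa :: "real^'n::finite \<Rightarrow> real \<Rightarrow> 'n aff" where "xa v c = (v, \<lambda>_. 0, c)"
definition aadd :: "'n::finite aff \<Rightarrow> 'n aff \<Rightarrow> 'n aff" where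
  "aadd f g = (fst f + fst g, \<lambda>n. fst (snd f) n + fst (snd g) n, snd (snd f) + snd (snd g))"
definition asc :: "real \<Rightarrow> 'n::finite aff \<Rightarrow> 'n aff" where
  "asc c f = (c *\<^sub>R fst f, \<lambda>n. c * fst (snd f) n, c * snd (snd f))"
definition asum :: "('a \<Rightarrow> 'n::finite aff) \<Rightarrow> 'a set \<Rightarrow> 'n aff" where
  "asum F S = (\<Sum>s\<in>S. fst (F s), \<lambda>n. \<Sum>s\<in>S. fst (snd (F s)) n, \<Sum>s\<in>S. snd (snd (F s)))"

lemma ev_yv: "k < N \<Longrightarrow> aff_eval N (yv k) x y = y k"
proof -
  assume k: "k < N"
  have "(\<Sum>n<N. (if n = k then 1 else 0) * y n) = (\<Sum>n<N. if n = k then y n else 0)"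
    by (intro sum.cong) auto
  also have "\<dots> = y k" using k by (simp add: sum.delta')
  finally show ?thesis by (simp add: aff_eval_def yv_def)
qed

lemma ev_xa: "aff_eval N (xa v c) x y = v \<bullet> x + c"
  by (simp add: aff_eval_def xa_def)

lemma ev_aadd: "aff_eval N (aadd f g) x y = aff_eval N f x y + aff_eval N g x y"
  by (simp add: aff_eval_def aadd_def inner_add_left sum.distrib algebra_simps)

lemma ev_asc: "aff_eval N (asc c f) x y = c * aff_eval N f x y"
  by (simp add: aff_eval_def asc_def sum_distrib_left algebra_simps)

lemma ev_asum: "finite S \<Longrightarrow> aff_eval N (asum F S) x y = (\<Sum>s\<in>S. aff_eval N (F s) x y)"
proof -
  assume S: "finite S"
  have "(\<Sum>k<N. (\<Sum>s\<in>S. fst (snd (F s)) k) * y k) = (\<Sum>s\<in>S. \<Sum>k<N. fst (snd (F s)) k * y k)"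
    by (simp add: sum_distrib_right sum.swap[of _ S])
  then show ?thesis
    by (simp add: aff_eval_def asum_def inner_sum_left sum.distrib)
qed

lemma soc_nil: "soc_holds N ([], t) x y \<longleftrightarrow> 0 \<le> aff_eval N t x y"
  by (simp add: soc_holds_def)

lemma norm_vec_sqrt: "norm (w::real^'n::finite) = sqrt (\<Sum>j\<in>UNIV. (w$j)^2)"
  by (simp add: norm_vec_def L2_set_def)



lemma transpose_vec_nth: "(transpose B *v w) $ j = (\<Sum>k\<in>UNIV. B $ k $ j * (w::real^'n::finite) $ k)"
  by (simp add: vector_matrix_mult_def mult.commute)

lemma cs_iff_gen:
  assumes js: "set js = UNIV"
  shows "(\<forall>k\<in>set (map c6 [0..<p] @ concat (map (\<lambda>r. c5 r # concat (map (\<lambda>i. c1 r i # map (c2 r i) js @ map (c3 r i) js) [0..<l])) [0..<m])). S k) \<longleftrightarrow>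
     (\<forall>i<p. S (c6 i)) \<and>
     (\<forall>r<m. S (c5 r) \<and> (\<forall>i<l. S (c1 r i) \<and>
        (\<forall>j. S (c2 r i j)) \<and> (\<forall>j. S (c3 r i j))))"
  using js by (simp add: ball_Un ball_UN atLeast0LessThan) (auto simp: ball_Un)

lemma vecmat_nth: "((w::real^'n::finite) v* B) $ j = (\<Sum>k\<in>UNIV. B $ k $ j * w $ k)"
  by (simp add: vector_matrix_mult_def mult.commute)

theorem corollary2:
  fixes c :: "real^'n"
    and m :: nat and b :: "nat \<Rightarrow> real" and l :: nat
    and ah :: "nat \<Rightarrow> real^'n"
    and lo hi :: "nat \<Rightarrow> 'n \<Rightarrow> real"
    and pa :: "nat \<Rightarrow> 'n \<Rightarrow> real \<Rightarrow> real"
    and G :: "nat \<Rightarrow> real" and pd :: "nat \<Rightarrow> real \<Rightarrow> real"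
    and B :: "nat \<Rightarrow> real^'n^'n"
    and p :: nat and Gx :: "nat \<Rightarrow> real^'n" and hx :: "nat \<Rightarrow> real"
  assumes "l \<ge> 1"
    and "\<And>r j. r < m \<Longrightarrow> marg_poss (pa r j) (ah r $ j) (lo r j) (hi r j)"
    and "\<And>r. r < m \<Longrightarrow> dev_poss (pd r) (G r)"
  shows "\<exists>(N::nat) (cs :: ('n aff list \<times> 'n aff) list).
           \<forall>x::real^'n.
             ((\<forall>i<p. Gx i \<bullet> x \<le> hx i) \<and>
              (\<forall>r<m. worst_exp (amb_set l (Cset (pa r) (ah r) (lo r) (hi r) (pd r) (G r) (B r))) x
                       \<le> b r))
             \<longleftrightarrow> (\<exists>y::nat \<Rightarrow> real. \<forall>k\<in>set cs. soc_holds N k x y)"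
proof -
  note l = assms(1) and mp = assms(2) and dp = assms(3)
  obtain idx :: "'n \<Rightarrow> nat" and n0 where idx: "idx ` UNIV = {i. i < n0}" "inj idx"
    using finite_imp_inj_to_nat_seg[of "UNIV :: 'n set"] by auto
  obtain js :: "'n list" where js: "set js = UNIV" "distinct js"
    using finite_distinct_list[of "UNIV :: 'n set"] by auto
  define Keys :: "(nat \<times> nat \<times> nat \<times> nat) set" where "Keys = {..<3} \<times> {..<m} \<times> {..<l} \<times> {..<Suc n0}"
  define N where "N = Suc (Max (to_nat ` Keys))"
  have Kf: "finite Keys" by (simp add: Keys_def)
  have kN: "to_nat k < N" if "k \<in> Keys" for k
    using Kf that by (simp add: N_def le_imp_less_Suc)
  have idxlt: "idx j < Suc n0" for j
  proof -
    have "idx j \<in> idx ` UNIV" by simp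
    then show ?thesis using idx(1) by auto
  qed
  have kN0: "to_nat (0::nat, r, i, idx j) < N" "to_nat (1::nat, r, i, 0::nat) < N" "to_nat (2::nat, r, i, idx j) < N"
    if "r < m" "i < l" for r i j
    using that idxlt[of j] by (auto intro!: kN simp: Keys_def)
  define Lr where "Lr r i j = cut_lo (pa r j) (ah r $ j) (lo r j) (real i / real l)" for r i j
  define Ur where "Ur r i j = cut_hi (pa r j) (ah r $ j) (hi r j) (real i / real l)" for r i j
  define dr where "dr r i = dev_hi (pd r) (G r) (real i / real l)" for r i
  define W where "W (r::nat) (i::nat) j = (yv (to_nat (0::nat, r, i, idx j)) :: 'n aff)" for r i j
  define T where "T (r::nat) (i::nat) = (yv (to_nat (1::nat, r, i, 0::nat)) :: 'n aff)" for r i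
  define V where "V (r::nat) (i::nat) j = (yv (to_nat (2::nat, r, i, idx j)) :: 'n aff)" for r i j
  define Ce where "Ce r i j = aadd (xa (axis j 1) 0) (asum (\<lambda>k. asc (- (B r $ k $ j)) (W r i k)) UNIV)" for r i j
  define Ob where "Ob r i = aadd (asum (V r i) UNIV) (aadd (asum (\<lambda>k. asc ((B r *v ah r) $ k) (W r i k)) UNIV) (asc (dr r i) (T r i)))" for r i
  define c1 where "c1 r i = (map (W r i) js, T r i)" for r i
  define c2 where "c2 r i j = ([] :: 'n aff list, aadd (V r i j) (asc (- Lr r i j) (Ce r i j)))" for r i j
  define c3 where "c3 r i j = ([] :: 'n aff list, aadd (V r i j) (asc (- Ur r i j) (Ce r i j)))" for r i j
  define c5 where "c5 r = ([] :: 'n aff list, aadd (xa 0 (real l * b r)) (asc (-1) (asum (Ob r) {..<l})))" for r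
  define c6 where "c6 i = ([] :: 'n aff list, xa (- Gx i) (hx i))" for i
  define cs where "cs = map c6 [0..<p] @ concat (map (\<lambda>r. c5 r # concat (map (\<lambda>i. c1 r i # map (c2 r i) js @ map (c3 r i) js) [0..<l])) [0..<m])"
  have cs_iff: "(\<forall>k\<in>set cs. soc_holds N k x y) \<longleftrightarrow>
     (\<forall>i<p. soc_holds N (c6 i) x y) \<and>
     (\<forall>r<m. soc_holds N (c5 r) x y \<and> (\<forall>i<l. soc_holds N (c1 r i) x y \<and>
        (\<forall>j. soc_holds N (c2 r i j) x y) \<and> (\<forall>j. soc_holds N (c3 r i j) x y)))" for x y
    unfolding cs_def by (rule cs_iff_gen[OF js(1)])

  define wv where "wv y (r::nat) (i::nat) = (\<chi> j. y (to_nat (0::nat, r, i, idx j)))" for y :: "nat \<Rightarrow> real" and r i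
  define tv where "tv y (r::nat) (i::nat) = y (to_nat (1::nat, r, i, 0::nat))" for y :: "nat \<Rightarrow> real" and r i
  define vv where "vv y (r::nat) (i::nat) j = y (to_nat (2::nat, r, i, idx j))" for y :: "nat \<Rightarrow> real" and r i j
  define cc where "cc x y r i = x - transpose (B r) *v wv y r i" for x y r i
  have eW: "aff_eval N (W r i j) x y = wv y r i $ j" if "r < m" "i < l" for x y r i j
    using kN0[OF that] by (simp add: W_def wv_def ev_yv)
  have eT: "aff_eval N (T r i) x y = tv y r i" if "r < m" "i < l" for x y r i
    using kN0[OF that] by (simp add: T_def tv_def ev_yv)
  have eV: "aff_eval N (V r i j) x y = vv y r i j" if "r < m" "i < l" for x y r i j
    using kN0[OF that] by (simp add: V_def vv_def ev_yv)
  have eCe: "aff_eval N (Ce r i j) x y = cc x y r i $ j" if "r < m" "i < l" for x y r i j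
    using that by (simp add: Ce_def cc_def ev_aadd ev_xa ev_asum ev_asc eW inner_axis' vecmat_nth
        sum_negf)
  have eOb: "aff_eval N (Ob r i) x y = (\<Sum>j\<in>UNIV. vv y r i j) + (B r *v ah r) \<bullet> wv y r i + dr r i * tv y r i"
    if "r < m" "i < l" for x y r i
    using that by (simp add: Ob_def ev_aadd ev_asum ev_asc eW eV eT inner_vec_def)
  have s1: "soc_holds N (c1 r i) x y \<longleftrightarrow> norm (wv y r i) \<le> tv y r i" if "r < m" "i < l" for x y r i
  proof -
    have "(\<Sum>u\<leftarrow>map (W r i) js. (aff_eval N u x y)\<^sup>2) = (\<Sum>j\<leftarrow>js. (wv y r i $ j)\<^sup>2)"
      using that by (simp add: o_def eW)
    also have "\<dots> = (\<Sum>j\<in>UNIV. (wv y r i $ j)\<^sup>2)"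
      using js by (simp add: sum_list_distinct_conv_sum_set)
    finally show ?thesis using that by (simp add: soc_holds_def c1_def eT norm_vec_sqrt)
  qed
  have s2: "soc_holds N (c2 r i j) x y \<longleftrightarrow> Lr r i j * cc x y r i $ j \<le> vv y r i j" if "r < m" "i < l" for x y r i j
    using that by (simp add: soc_nil c2_def ev_aadd ev_asc eV eCe)
  have s3: "soc_holds N (c3 r i j) x y \<longleftrightarrow> Ur r i j * cc x y r i $ j \<le> vv y r i j" if "r < m" "i < l" for x y r i j
    using that by (simp add: soc_nil c3_def ev_aadd ev_asc eV eCe)
  have s5: "soc_holds N (c5 r) x y \<longleftrightarrow>
      (\<Sum>i<l. (\<Sum>j\<in>UNIV. vv y r i j) + (B r *v ah r) \<bullet> wv y r i + dr r i * tv y r i) \<le> real l * b r"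
    if "r < m" for x y r
  proof -
    have "aff_eval N (asum (Ob r) {..<l}) x y = (\<Sum>i<l. (\<Sum>j\<in>UNIV. vv y r i j) + (B r *v ah r) \<bullet> wv y r i + dr r i * tv y r i)"
      using that by (simp add: ev_asum eOb)
    then show ?thesis by (simp add: soc_nil c5_def ev_aadd ev_asc ev_xa)
  qed
  have s6: "soc_holds N (c6 i) x y \<longleftrightarrow> Gx i \<bullet> x \<le> hx i" for x y i
    by (simp add: soc_nil c6_def ev_xa)

  have dnn: "dr r i \<ge> 0" if "r < m" "i < l" for r i
    using dev_hi_nonneg[OF dp[OF that(1)], of "real i / real l"] that by (simp add: dr_def)
  have char: "worst_exp (amb_set l (Cset (pa r) (ah r) (lo r) (hi r) (pd r) (G r) (B r))) x \<le> b r \<longleftrightarrow>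
     (\<exists>w::nat \<Rightarrow> real^'n. (\<Sum>i<l. Dobj (B r) (ah r) (Lr r i) (Ur r i) (dr r i) x (w i)) \<le> real l * b r)"
    if r: "r < m" for r x
    using constraint_char[of l "pa r" "ah r" "lo r" "hi r" "pd r" "G r" "B r" x "b r", OF l mp[OF r] dp[OF r]]
    by (simp add: Lr_def[abs_def] Ur_def[abs_def] dr_def)
  show ?thesis
  proof (intro exI[of _ N] exI[of _ cs] allI)
    fix x :: "real^'n"
    show "((\<forall>i<p. Gx i \<bullet> x \<le> hx i) \<and>
              (\<forall>r<m. worst_exp (amb_set l (Cset (pa r) (ah r) (lo r) (hi r) (pd r) (G r) (B r))) x
                       \<le> b r))
             \<longleftrightarrow> (\<exists>y::nat \<Rightarrow> real. \<forall>k\<in>set cs. soc_holds N k x y)"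
    proof
      assume h: "(\<forall>i<p. Gx i \<bullet> x \<le> hx i) \<and>
              (\<forall>r<m. worst_exp (amb_set l (Cset (pa r) (ah r) (lo r) (hi r) (pd r) (G r) (B r))) x \<le> b r)"
      have "\<forall>r. \<exists>w::nat \<Rightarrow> real^'n. r < m \<longrightarrow> (\<Sum>i<l. Dobj (B r) (ah r) (Lr r i) (Ur r i) (dr r i) x (w i)) \<le> real l * b r"
        using h char by blast
      then obtain Wf :: "nat \<Rightarrow> nat \<Rightarrow> real^'n" where
        Wf: "\<And>r. r < m \<Longrightarrow> (\<Sum>i<l. Dobj (B r) (ah r) (Lr r i) (Ur r i) (dr r i) x (Wf r i)) \<le> real l * b r"
        by metis
      define val where "val = (\<lambda>(tg::nat, r::nat, i::nat, jj::nat).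
         if tg = 0 then Wf r i $ inv idx jj
         else if tg = 1 then norm (Wf r i)
         else if tg = 2 then max (Lr r i (inv idx jj) * (x - transpose (B r) *v Wf r i) $ inv idx jj)
                                 (Ur r i (inv idx jj) * (x - transpose (B r) *v Wf r i) $ inv idx jj)
         else 0)"
      define y where "y n = val (from_nat n)" for n
      have iv: "inv idx (idx j) = j" for j using idx(2) by (simp add: inv_f_f)
      have ywv: "wv y r i = Wf r i" for r i
        by (simp add: wv_def y_def val_def iv vec_eq_iff)
      have ytv: "tv y r i = norm (Wf r i)" for r i
        by (simp add: tv_def y_def val_def)
      have yvv: "vv y r i j = max (Lr r i j * cc x y r i $ j) (Ur r i j * cc x y r i $ j)" for r i j
        by (simp add: vv_def y_def val_def iv cc_def ywv)
      have "\<forall>k\<in>set cs. soc_holds N k x y"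
        unfolding cs_iff
      proof (intro conjI allI impI)
        fix i assume "i < p" then show "soc_holds N (c6 i) x y" using h s6 by blast
      next
        fix r assume r: "r < m"
        have "(\<Sum>i<l. (\<Sum>j\<in>UNIV. vv y r i j) + (B r *v ah r) \<bullet> wv y r i + dr r i * tv y r i)
            = (\<Sum>i<l. Dobj (B r) (ah r) (Lr r i) (Ur r i) (dr r i) x (Wf r i))"
          by (intro sum.cong refl) (simp add: Dobj_def yvv ywv ytv cc_def)
        then show "soc_holds N (c5 r) x y" using s5[OF r] Wf[OF r] by simp
      next
        fix r i assume ri: "r < m" "i < l"
        show "soc_holds N (c1 r i) x y" using s1[OF ri] by (simp add: ywv ytv)
      next
        fix r i j assume ri: "r < m" "i < l"
        show "soc_holds N (c2 r i j) x y" using s2[OF ri] by (simp add: yvv)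
      next
        fix r i j assume ri: "r < m" "i < l"
        show "soc_holds N (c3 r i j) x y" using s3[OF ri] by (simp add: yvv)
      qed
      then show "\<exists>y. \<forall>k\<in>set cs. soc_holds N k x y" by blast
    next
      assume "\<exists>y. \<forall>k\<in>set cs. soc_holds N k x y"
      then obtain y where y: "\<forall>k\<in>set cs. soc_holds N k x y" by blast
      note yy = y[unfolded cs_iff]
      have "\<forall>i<p. Gx i \<bullet> x \<le> hx i" using yy s6 by blast
      moreover have "worst_exp (amb_set l (Cset (pa r) (ah r) (lo r) (hi r) (pd r) (G r) (B r))) x \<le> b r"
        if r: "r < m" for r
      proof -
        have "Dobj (B r) (ah r) (Lr r i) (Ur r i) (dr r i) x (wv y r i)
              \<le> (\<Sum>j\<in>UNIV. vv y r i j) + (B r *v ah r) \<bullet> wv y r i + dr r i * tv y r i" if i: "i \<in> {..<l}" for i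
        proof -
          have ri: "r < m" "i < l" using r i by auto
          have "(\<Sum>j\<in>UNIV. max (Lr r i j * cc x y r i $ j) (Ur r i j * cc x y r i $ j)) \<le> (\<Sum>j\<in>UNIV. vv y r i j)"
          proof (intro sum_mono)
            fix j
            have "Lr r i j * cc x y r i $ j \<le> vv y r i j" using yy ri s2[OF ri] by blast
            moreover have "Ur r i j * cc x y r i $ j \<le> vv y r i j" using yy ri s3[OF ri] by blast
            ultimately show "max (Lr r i j * cc x y r i $ j) (Ur r i j * cc x y r i $ j) \<le> vv y r i j" by simp
          qed
          moreover have "dr r i * norm (wv y r i) \<le> dr r i * tv y r i"
            using yy ri s1[OF ri] dnn[OF ri] by (intro mult_left_mono) blast+
          ultimately show ?thesis by (simp add: Dobj_def cc_def)
        qed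
        then have "(\<Sum>i<l. Dobj (B r) (ah r) (Lr r i) (Ur r i) (dr r i) x (wv y r i))
            \<le> (\<Sum>i<l. (\<Sum>j\<in>UNIV. vv y r i j) + (B r *v ah r) \<bullet> wv y r i + dr r i * tv y r i)"
          by (rule sum_mono)
        also have "\<dots> \<le> real l * b r" using yy r s5[OF r] by blast
        finally show ?thesis using char[OF r] by blast
      qed
      ultimately show "(\<forall>i<p. Gx i \<bullet> x \<le> hx i) \<and>
              (\<forall>r<m. worst_exp (amb_set l (Cset (pa r) (ah r) (lo r) (hi r) (pd r) (G r) (B r))) x \<le> b r)"
        by blast
    qed
  qed
qed


end
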